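(* Let $\rho\in(0,1)\cup(1,\infty)$, $\xi\in\mathbb{R}$, and $H=\frac{1}{2(1+\rho\sinh^2\chi)}\big(\cosh^2\chi P_\chi^2+\frac{P_\phi^2}{\tanh^2\chi}+\xi\sinh^2\chi\big)$ on $(\chi,\phi)\in(0,\infty)\times\mathbb{S}^1$. Consider trajectories of the Hamiltonian flow on the level set $H=E$, $P_\phi=L>0$, with $\phi$ normalized by a rotation so that $\phi=0$ where $\chi$ is minimal. Let $\sigma=2(\rho-1)E-\xi$, $e=\sqrt{1+\frac{L^2\sigma}{(E+L^2/2)^2}}$ and $E_+=L\big[\sqrt{\xi+\rho(\rho-1)L^2}-(\rho-\tfrac12)L\big]$. If $E\in[E_+,\frac{\xi}{2\rho})$ and $\xi-\rho L^2>0$, the trajectories have equation $$\frac{L^2}{\tanh^2\chi}=\Big(E+\frac{L^2}{2}\Big)\big(1+e\cos(2\phi)\big),$$ and they are closed curves since $e<1$. *)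

theory Defs
  imports "HOL-Analysis.Analysis"
begin

text \<open>The Hamiltonian on the cotangent bundle of (0,inf) x S^1, in coordinates
  (chi, phi, P_chi, P_phi); phi is taken as a real lift of the angle.\<close>
definition Ham :: "real \<Rightarrow> real \<Rightarrow> real \<Rightarrow> real \<Rightarrow> real \<Rightarrow> real \<Rightarrow> real" where
  "Ham \<rho> \<xi> chi phi pchi pphi =
     (cosh chi ^ 2 * pchi ^ 2 + pphi ^ 2 / tanh chi ^ 2 + \<xi> * sinh chi ^ 2)
     / (2 * (1 + \<rho> * sinh chi ^ 2))"

definition ham_trajectory ::
  "real \<Rightarrow> real \<Rightarrow> (real \<Rightarrow> real) \<Rightarrow> (real \<Rightarrow> real) \<Rightarrow> (real \<Rightarrow> real) \<Rightarrow> (real \<Rightarrow> real) \<Rightarrow> bool" where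
  "ham_trajectory \<rho> \<xi> chi phi pchi pphi \<longleftrightarrow>
     (\<forall>t. chi t > 0 \<and>
        (chi has_real_derivative deriv (\<lambda>p. Ham \<rho> \<xi> (chi t) (phi t) p (pphi t)) (pchi t)) (at t) \<and>
        (phi has_real_derivative deriv (\<lambda>p. Ham \<rho> \<xi> (chi t) (phi t) (pchi t) p) (pphi t)) (at t) \<and>
        (pchi has_real_derivative - deriv (\<lambda>x. Ham \<rho> \<xi> x (phi t) (pchi t) (pphi t)) (chi t)) (at t) \<and>
        (pphi has_real_derivative - deriv (\<lambda>y. Ham \<rho> \<xi> (chi t) y (pchi t) (pphi t)) (phi t)) (at t))"

end

theory Submission imports Defs begin

lemma Ham_alt: "Ham \<rho> \<xi> x y p q =
  (cosh x ^ 2 * p ^ 2 + q ^ 2 * cosh x ^ 2 / sinh x ^ 2 + \<xi> * sinh x ^ 2) / (2 * (1 + \<rho> * sinh x ^ 2))"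
  by (simp add: Ham_def tanh_def power_divide)

lemma K_pos: "\<rho> > 0 \<Longrightarrow> 1 + \<rho> * sinh (x::real) ^ 2 > 0"
  by (simp add: add_pos_nonneg)

lemma d_p: assumes "\<rho> > 0" shows "deriv (\<lambda>p. Ham \<rho> \<xi> x y p q) p = cosh x ^ 2 * p / (1 + \<rho> * sinh x ^ 2)"
proof -
  have K: "1 + \<rho> * sinh x ^ 2 > 0" using K_pos assms by blast
  define a where "a = cosh x ^ 2 / (2 * (1 + \<rho> * sinh x ^ 2))"
  define b where "b = (q ^ 2 * cosh x ^ 2 / sinh x ^ 2 + \<xi> * sinh x ^ 2) / (2 * (1 + \<rho> * sinh x ^ 2))"
  have f: "(\<lambda>p. Ham \<rho> \<xi> x y p q) = (\<lambda>p. a * p ^ 2 + b)"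
    unfolding Ham_alt a_def b_def by (rule ext) (simp add: add_divide_distrib)
  have "((\<lambda>p. a * p ^ 2 + b) has_real_derivative a * (2 * p)) (at p)"
    by (rule derivative_eq_intros refl | simp)+
  then have "deriv (\<lambda>p. a * p ^ 2 + b) p = a * (2 * p)" by (rule DERIV_imp_deriv)
  then show ?thesis unfolding f using K by (simp add: a_def field_simps)
qed

lemma d_q: assumes "\<rho> > 0" "x > 0" shows "deriv (\<lambda>q. Ham \<rho> \<xi> x y p q) q = q * cosh x ^ 2 / (sinh x ^ 2 * (1 + \<rho> * sinh x ^ 2))"
proof -
  have K: "1 + \<rho> * sinh x ^ 2 > 0" using K_pos assms by blast
  have s: "sinh x \<noteq> 0" using assms by simp
  define a where "a = cosh x ^ 2 / sinh x ^ 2 / (2 * (1 + \<rho> * sinh x ^ 2))"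
  define b where "b = (cosh x ^ 2 * p ^ 2 + \<xi> * sinh x ^ 2) / (2 * (1 + \<rho> * sinh x ^ 2))"
  have f: "(\<lambda>q. Ham \<rho> \<xi> x y p q) = (\<lambda>q. a * q ^ 2 + b)"
    unfolding Ham_alt a_def b_def by (rule ext) (simp add: add_divide_distrib)
  have "((\<lambda>q. a * q ^ 2 + b) has_real_derivative a * (2 * q)) (at q)"
    by (rule derivative_eq_intros refl | simp)+
  then have "deriv (\<lambda>q. a * q ^ 2 + b) q = a * (2 * q)" by (rule DERIV_imp_deriv)
  moreover have "a * (2 * q) = q * cosh x ^ 2 / (sinh x ^ 2 * (1 + \<rho> * sinh x ^ 2))"
  proof -
    have nz: "sinh x ^ 2 \<noteq> 0" "1 + \<rho> * sinh x ^ 2 \<noteq> 0" using s K by auto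
    have g: "(c::real) / s / (2 * k) * (2 * q) = q * c / (s * k)" for c s k
      by (cases "s = 0"; cases "k = 0") (auto simp: field_simps)
    show ?thesis unfolding a_def by (rule g)
  qed
  ultimately show ?thesis unfolding f by simp
qed

lemma d_y: shows "deriv (\<lambda>y. Ham \<rho> \<xi> x y p q) y = 0"
  unfolding Ham_alt by simp

lemma h_deriv: assumes "x > 0"
  shows "((\<lambda>x. cosh x / sinh x) has_real_derivative - 1 / sinh x ^ 2) (at x)"
proof -
  have s: "sinh x \<noteq> 0" using assms by simp
  have c2: "cosh x * cosh x = 1 + sinh x * sinh x" using cosh_square_eq[of x] by (simp add: power2_eq_square)
  have "((\<lambda>x. cosh x / sinh x) has_real_derivative (sinh x * 1 * sinh x - cosh x * (cosh x * 1)) / (sinh x * sinh x)) (at x)"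
    by (rule DERIV_divide[OF has_field_derivative_cosh[OF DERIV_ident] has_field_derivative_sinh[OF DERIV_ident] s])
  then show ?thesis
    by (rule DERIV_cong) (simp add: c2 power2_eq_square)
qed

lemma g_deriv: assumes "x > 0"
  shows "((\<lambda>x. L ^ 2 * (cosh x / sinh x) ^ 2) has_real_derivative - 2 * L ^ 2 * cosh x / sinh x ^ 3) (at x)"
proof -
  have s: "sinh x \<noteq> 0" using assms by simp
  show ?thesis
    using DERIV_cmult[OF DERIV_power[OF h_deriv[OF assms]], of "L ^ 2" 2]
    by (rule DERIV_cong) (use s in \<open>simp add: power2_eq_square power3_eq_cube\<close>)
qed
lemma d_x: assumes "\<rho> > 0" "x > 0" shows "deriv (\<lambda>x. Ham \<rho> \<xi> x y p q) x =
   ((2 * cosh x * sinh x * p ^ 2 - 2 * q ^ 2 * cosh x / sinh x ^ 3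
     + \<xi> * 2 * sinh x * cosh x) * (2 * (1 + \<rho> * sinh x ^ 2))
    - (cosh x ^ 2 * p ^ 2 + q ^ 2 * cosh x ^ 2 / sinh x ^ 2 + \<xi> * sinh x ^ 2) * (4 * \<rho> * sinh x * cosh x))
   / (2 * (1 + \<rho> * sinh x ^ 2)) ^ 2"
proof -
  have K: "2 * (1 + \<rho> * sinh x ^ 2) \<noteq> 0" using K_pos[OF assms(1), of x] by simp
  have e: "(\<lambda>x. Ham \<rho> \<xi> x y p q) = (\<lambda>x. (p ^ 2 * cosh x ^ 2 + q ^ 2 * (cosh x / sinh x) ^ 2 + \<xi> * sinh x ^ 2) / (2 * (1 + \<rho> * sinh x ^ 2)))"
    by (rule ext) (simp add: Ham_alt power_divide mult.commute)
  have N: "((\<lambda>x. p ^ 2 * cosh x ^ 2 + q ^ 2 * (cosh x / sinh x) ^ 2 + \<xi> * sinh x ^ 2) has_real_derivative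
     p ^ 2 * (of_nat 2 * ((sinh x * 1) * cosh x ^ (2 - Suc 0))) + (- 2 * q ^ 2 * cosh x / sinh x ^ 3)
      + \<xi> * (of_nat 2 * ((cosh x * 1) * sinh x ^ (2 - Suc 0)))) (at x)"
    by (intro DERIV_add DERIV_cmult DERIV_power has_field_derivative_cosh[OF DERIV_ident]
         has_field_derivative_sinh[OF DERIV_ident] g_deriv assms(2))
  have D: "((\<lambda>x. 2 * (1 + \<rho> * sinh x ^ 2)) has_real_derivative 2 * (0 + \<rho> * (of_nat 2 * ((cosh x * 1) * sinh x ^ (2 - Suc 0))))) (at x)"
    by (intro DERIV_add DERIV_cmult DERIV_power DERIV_const has_field_derivative_sinh[OF DERIV_ident])
  note X = DERIV_divide[OF N D K]
  show ?thesis unfolding e DERIV_imp_deriv[OF X] by (simp add: power_divide power2_eq_square mult.commute mult.left_commute)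
qed

lemma alg:
  fixes c s p L \<rho> \<xi> E :: real
  assumes s: "s > 0" and c: "c > 0" and cs: "c ^ 2 = 1 + s ^ 2" and K: "1 + \<rho> * s ^ 2 > 0"
    and en: "c ^ 2 * p ^ 2 + L ^ 2 * c ^ 2 / s ^ 2 + \<xi> * s ^ 2 = 2 * E * (1 + \<rho> * s ^ 2)"
  shows "- L * ((- 1 / s ^ 2) * (c ^ 2 * p / (1 + \<rho> * s ^ 2)) * p + c / s * (- (((2 * c * s * p ^ 2 - 2 * L ^ 2 * c / s ^ 3
     + \<xi> * 2 * s * c) * (2 * (1 + \<rho> * s ^ 2))
    - (c ^ 2 * p ^ 2 + L ^ 2 * c ^ 2 / s ^ 2 + \<xi> * s ^ 2) * (4 * \<rho> * s * c))
   / (2 * (1 + \<rho> * s ^ 2)) ^ 2)))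
   = - 2 * (L ^ 2 * c ^ 2 / s ^ 2 - (E + L ^ 2 / 2)) * (L * c ^ 2 / (s ^ 2 * (1 + \<rho> * s ^ 2)))"
proof -
  define K where "K = 1 + \<rho> * s ^ 2"
  have K0: "K \<noteq> 0" using K K_def by simp
  have s0: "s \<noteq> 0" using s by simp
  have en': "c ^ 2 * p ^ 2 + L ^ 2 * c ^ 2 / s ^ 2 + \<xi> * s ^ 2 = 2 * E * K" using en K_def by simp
  have Dx: "((2 * c * s * p ^ 2 - 2 * L ^ 2 * c / s ^ 3 + \<xi> * 2 * s * c) * (2 * K)
    - (c ^ 2 * p ^ 2 + L ^ 2 * c ^ 2 / s ^ 2 + \<xi> * s ^ 2) * (4 * \<rho> * s * c)) / (2 * K) ^ 2
    = c * (s * p ^ 2 - L ^ 2 / s ^ 3 + \<xi> * s - 2 * E * \<rho> * s) / K"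
    unfolding en' using K0 by (simp add: field_simps power2_eq_square)
  have step2: "- L * ((- 1 / s ^ 2) * (c ^ 2 * p / K) * p + c / s * (- (c * (s * p ^ 2 - L ^ 2 / s ^ 3 + \<xi> * s - 2 * E * \<rho> * s) / K)))
     = (L * c ^ 2 / K) * (p ^ 2 / s ^ 2 + p ^ 2 - L ^ 2 / s ^ 4 + \<xi> - 2 * E * \<rho>)"
    using K0 s0 by (simp add: field_simps power2_eq_square power3_eq_cube power4_eq_xxxx)
  have step3: "p ^ 2 / s ^ 2 + p ^ 2 = (2 * E * K - L ^ 2 * c ^ 2 / s ^ 2 - \<xi> * s ^ 2) / s ^ 2"
  proof -
    have "p ^ 2 / s ^ 2 + p ^ 2 = c ^ 2 * p ^ 2 / s ^ 2" using cs s0 by (simp add: field_simps)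
    also have "c ^ 2 * p ^ 2 = 2 * E * K - L ^ 2 * c ^ 2 / s ^ 2 - \<xi> * s ^ 2" using en' by simp
    finally show ?thesis .
  qed
  have step4: "(2 * E * K - L ^ 2 * c ^ 2 / s ^ 2 - \<xi> * s ^ 2) / s ^ 2 - L ^ 2 / s ^ 4 + \<xi> - 2 * E * \<rho>
      = - 2 * (L ^ 2 * c ^ 2 / s ^ 2 - (E + L ^ 2 / 2)) / s ^ 2"
    using s0 cs unfolding K_def by (simp add: field_simps power2_eq_square power4_eq_xxxx)
  have "(L * c ^ 2 / K) * (p ^ 2 / s ^ 2 + p ^ 2 - L ^ 2 / s ^ 4 + \<xi> - 2 * E * \<rho>)
     = - 2 * (L ^ 2 * c ^ 2 / s ^ 2 - (E + L ^ 2 / 2)) * (L * c ^ 2 / (s ^ 2 * K))"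
  proof -
    have f: "p ^ 2 / s ^ 2 + p ^ 2 - L ^ 2 / s ^ 4 + \<xi> - 2 * E * \<rho> = - 2 * (L ^ 2 * c ^ 2 / s ^ 2 - (E + L ^ 2 / 2)) / s ^ 2"
      unfolding step3 step4 ..
    show ?thesis unfolding f by (simp add: ac_simps)
  qed
  then show ?thesis using Dx step2 unfolding K_def by simp
qed

lemma alg':
  fixes c s p L \<rho> \<xi> E :: real
  assumes s: "s > 0" and c: "c > 0" and cs: "c ^ 2 = 1 + s ^ 2" and K: "1 + \<rho> * s ^ 2 > 0"
    and en: "c ^ 2 * p ^ 2 + L ^ 2 * c ^ 2 / s ^ 2 + \<xi> * s ^ 2 = 2 * E * (1 + \<rho> * s ^ 2)"
  shows "- L * ((- 1 / s ^ 2) * (c ^ 2 * p / (1 + \<rho> * s ^ 2)) * p + (- (((2 * c * s * p ^ 2 - 2 * L ^ 2 * c / s ^ 3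
     + \<xi> * 2 * s * c) * (2 * (1 + \<rho> * s ^ 2))
    - (c ^ 2 * p ^ 2 + L ^ 2 * c ^ 2 / s ^ 2 + \<xi> * s ^ 2) * (4 * \<rho> * s * c))
   / (2 * (1 + \<rho> * s ^ 2)) ^ 2)) * (c / s))
   = - 2 * (L ^ 2 * c ^ 2 / s ^ 2 - (E + L ^ 2 / 2)) * (L * c ^ 2 / (s ^ 2 * (1 + \<rho> * s ^ 2)))"
  by (subst mult.commute[of _ "c/s"]) (rule alg[OF assms])

lemma alg'':
  fixes c s p L \<rho> \<xi> E :: real
  assumes s: "s > 0" and c: "c > 0" and cs: "c ^ 2 = 1 + s ^ 2" and K: "1 + \<rho> * s ^ 2 > 0"
    and en: "c ^ 2 * p ^ 2 + L ^ 2 * c ^ 2 / s ^ 2 + \<xi> * s ^ 2 = 2 * E * (1 + \<rho> * s ^ 2)"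
  shows "- L * ((- 1 / s ^ 2) * (c ^ 2 * p / (1 + \<rho> * s ^ 2)) * p + (- (((2 * c * s * p ^ 2 - 2 * L ^ 2 * c / s ^ 3
     + \<xi> * 2 * s * c) * (2 * (1 + \<rho> * s ^ 2))
    - (c ^ 2 * p ^ 2 + L ^ 2 * c ^ 2 / s ^ 2 + \<xi> * s ^ 2) * (4 * \<rho> * s * c))
   / (2 * (1 + \<rho> * s ^ 2)) ^ 2)) * (c / s))
   = - 2 * (L ^ 2 * (c / s) ^ 2 - (E + L ^ 2 / 2)) * (L * c ^ 2 / (s ^ 2 * (1 + \<rho> * s ^ 2)))"
proof -
  have eq: "L ^ 2 * (c / s) ^ 2 = L ^ 2 * c ^ 2 / s ^ 2" by (simp add: power_divide)
  show ?thesis by (subst eq) (rule alg'[OF assms])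
qed

lemma wal: fixes s c K L p :: real assumes "s \<noteq> 0" "K \<noteq> 0"
  shows "(- 2 * L ^ 2 * c / s ^ 3) * (c ^ 2 * p / K) - 0 = 2 * (- L * (c / s * p)) * (L * c ^ 2 / (s ^ 2 * K))"
  using assms by (simp add: field_simps power2_eq_square power3_eq_cube)

lemma alg3:
  fixes c s L \<rho> \<xi> E :: real
  assumes s: "s > 0" and cs: "c ^ 2 = 1 + s ^ 2"
    and en: "L ^ 2 * c ^ 2 / s ^ 2 + \<xi> * s ^ 2 = 2 * E * (1 + \<rho> * s ^ 2)"
  shows "(L ^ 2 * (c / s) ^ 2 - (E + L ^ 2 / 2)) ^ 2 = (E + L ^ 2 / 2) ^ 2 + L ^ 2 * (2 * (\<rho> - 1) * E - \<xi>)"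
proof -
  have s0: "s \<noteq> 0" using s by simp
  define u where "u = L ^ 2 * c ^ 2 / s ^ 2"
  have u1: "L ^ 2 * (c / s) ^ 2 = u" unfolding u_def by (simp add: power_divide)
  have u2: "u = L ^ 2 + L ^ 2 / s ^ 2" unfolding u_def cs using s0 by (simp add: field_simps)
  have xi: "\<xi> = 2 * E / s ^ 2 + 2 * E * \<rho> - u / s ^ 2"
  proof -
    have e1: "\<xi> * s ^ 2 = 2 * E * (1 + \<rho> * s ^ 2) - u" using en unfolding u_def by linarith
    have "\<xi> = (2 * E * (1 + \<rho> * s ^ 2) - u) / s ^ 2" using e1 s0 by (simp add: eq_divide_eq)
    also have "\<dots> = 2 * E / s ^ 2 + 2 * E * \<rho> - u / s ^ 2" using s0 by (simp add: field_simps)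
    finally show ?thesis .
  qed
  have "(u - (E + L ^ 2 / 2)) ^ 2 = (E + L ^ 2 / 2) ^ 2 + L ^ 2 * (2 * (\<rho> - 1) * E - \<xi>)"
    unfolding xi u2 using s0 by (simp add: field_simps power2_eq_square)
  then show ?thesis unfolding u1 .
qed

lemma coth_sq: "(x::real) > 0 \<Longrightarrow> (cosh x / sinh x) ^ 2 = 1 + 1 / sinh x ^ 2"
  by (simp add: power_divide cosh_square_eq field_simps)

theorem proposition13:
  fixes \<rho> \<xi> E L :: real and chi phi pchi pphi :: "real \<Rightarrow> real"
  defines "\<sigma> \<equiv> 2 * (\<rho> - 1) * E - \<xi>"
  defines "e \<equiv> sqrt (1 + L ^ 2 * \<sigma> / (E + L ^ 2 / 2) ^ 2)"
  defines "Eplus \<equiv> L * (sqrt (\<xi> + \<rho> * (\<rho> - 1) * L ^ 2) - (\<rho> - 1 / 2) * L)"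
  assumes rho: "\<rho> > 0" "\<rho> \<noteq> 1"
    and L: "L > 0"
    and E: "Eplus \<le> E" "E < \<xi> / (2 * \<rho>)"
    and xi: "\<xi> - \<rho> * L ^ 2 > 0"
    and traj: "ham_trajectory \<rho> \<xi> chi phi pchi pphi"
    and energy: "\<forall>t. Ham \<rho> \<xi> (chi t) (phi t) (pchi t) (pphi t) = E"
    and mom: "\<forall>t. pphi t = L"
    and normal: "\<exists>t0. (\<forall>t. chi t0 \<le> chi t) \<and> phi t0 = 0"
  shows "(\<forall>t. L ^ 2 / tanh (chi t) ^ 2 = (E + L ^ 2 / 2) * (1 + e * cos (2 * phi t)))
         \<and> 0 \<le> 1 + L ^ 2 * \<sigma> / (E + L ^ 2 / 2) ^ 2 \<and> e < 1"
proof -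
  define A where "A = E + L ^ 2 / 2"
  define w where "w = (\<lambda>t. L ^ 2 * (cosh (chi t) / sinh (chi t)) ^ 2 - A)"
  define z where "z = (\<lambda>t. - L * (cosh (chi t) / sinh (chi t) * pchi t))"
  define om where "om = (\<lambda>t. L * cosh (chi t) ^ 2 / (sinh (chi t) ^ 2 * (1 + \<rho> * sinh (chi t) ^ 2)))"
  have rho0: "\<rho> > 0" using rho by simp
  have pos: "chi t > 0" for t using traj unfolding ham_trajectory_def by blast
  have Kp: "1 + \<rho> * sinh (chi t) ^ 2 > 0" for t using K_pos rho0 by blast
  have T: "(chi has_real_derivative deriv (\<lambda>p. Ham \<rho> \<xi> (chi t) (phi t) p (pphi t)) (pchi t)) (at t) \<and>
        (phi has_real_derivative deriv (\<lambda>p. Ham \<rho> \<xi> (chi t) (phi t) (pchi t) p) (pphi t)) (at t) \<and>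
        (pchi has_real_derivative - deriv (\<lambda>x. Ham \<rho> \<xi> x (phi t) (pchi t) (pphi t)) (chi t)) (at t)" for t
    using traj unfolding ham_trajectory_def by blast
  have chiD: "(chi has_real_derivative cosh (chi t) ^ 2 * pchi t / (1 + \<rho> * sinh (chi t) ^ 2)) (at t)" for t
    using T[of t] d_p[OF rho0, of \<xi> "chi t" "phi t" "pphi t" "pchi t"] by simp
  have phiD: "(phi has_real_derivative om t) (at t)" for t
    using T[of t] d_q[OF rho0 pos[of t], of \<xi> "phi t" "pchi t" "pphi t"] mom unfolding om_def by simp
  have pD: "(pchi has_real_derivative - (((2 * cosh (chi t) * sinh (chi t) * pchi t ^ 2 - 2 * L ^ 2 * cosh (chi t) / sinh (chi t) ^ 3
     + \<xi> * 2 * sinh (chi t) * cosh (chi t)) * (2 * (1 + \<rho> * sinh (chi t) ^ 2))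
    - (cosh (chi t) ^ 2 * pchi t ^ 2 + L ^ 2 * cosh (chi t) ^ 2 / sinh (chi t) ^ 2 + \<xi> * sinh (chi t) ^ 2) * (4 * \<rho> * sinh (chi t) * cosh (chi t)))
   / (2 * (1 + \<rho> * sinh (chi t) ^ 2)) ^ 2)) (at t)" for t
    using T[of t] d_x[OF rho0 pos[of t], of \<xi> "phi t" "pchi t" "pphi t"] mom by simp
  have en: "cosh (chi t) ^ 2 * pchi t ^ 2 + L ^ 2 * cosh (chi t) ^ 2 / sinh (chi t) ^ 2 + \<xi> * sinh (chi t) ^ 2
     = 2 * E * (1 + \<rho> * sinh (chi t) ^ 2)" for t
  proof -
    have K: "1 + \<rho> * sinh (chi t) ^ 2 > 0" using Kp by blast
    from energy mom have "Ham \<rho> \<xi> (chi t) (phi t) (pchi t) L = E" by metis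
    then show ?thesis unfolding Ham_alt using K by (simp add: field_simps)
  qed
  have wD: "(w has_real_derivative 2 * z t * om t) (at t)" for t
  proof -
    have "((\<lambda>t. L ^ 2 * (cosh (chi t) / sinh (chi t)) ^ 2 - A) has_real_derivative
       (- 2 * L ^ 2 * cosh (chi t) / sinh (chi t) ^ 3) * (cosh (chi t) ^ 2 * pchi t / (1 + \<rho> * sinh (chi t) ^ 2)) - 0) (at t)"
      by (rule DERIV_diff[OF DERIV_chain2[OF g_deriv[OF pos] chiD] DERIV_const])
    then show ?thesis unfolding w_def
      apply (rule DERIV_cong)
      unfolding z_def om_def
      apply (rule wal[of "sinh (chi t)" "1 + \<rho> * sinh (chi t) ^ 2" L "cosh (chi t)" "pchi t"])
      using pos[of t] Kp[of t] by auto
  qed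
  have zD: "(z has_real_derivative - 2 * w t * om t) (at t)" for t
  proof -
    have "((\<lambda>t. - L * (cosh (chi t) / sinh (chi t) * pchi t)) has_real_derivative
       - L * ((- 1 / sinh (chi t) ^ 2) * (cosh (chi t) ^ 2 * pchi t / (1 + \<rho> * sinh (chi t) ^ 2)) * pchi t
          + (- (((2 * cosh (chi t) * sinh (chi t) * pchi t ^ 2 - 2 * L ^ 2 * cosh (chi t) / sinh (chi t) ^ 3
     + \<xi> * 2 * sinh (chi t) * cosh (chi t)) * (2 * (1 + \<rho> * sinh (chi t) ^ 2))
    - (cosh (chi t) ^ 2 * pchi t ^ 2 + L ^ 2 * cosh (chi t) ^ 2 / sinh (chi t) ^ 2 + \<xi> * sinh (chi t) ^ 2) * (4 * \<rho> * sinh (chi t) * cosh (chi t)))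
   / (2 * (1 + \<rho> * sinh (chi t) ^ 2)) ^ 2)) * (cosh (chi t) / sinh (chi t)))) (at t)"
      by (rule DERIV_cmult[OF DERIV_mult[OF DERIV_chain2[OF h_deriv[OF pos] chiD] pD]])
    then show ?thesis unfolding z_def
      apply (rule DERIV_cong)
      unfolding w_def om_def A_def
    proof (rule alg'')
      show "sinh (chi t) > 0" "cosh (chi t) > 0" using pos[of t] by auto
      show "cosh (chi t) ^ 2 = 1 + sinh (chi t) ^ 2" by (simp add: cosh_square_eq)
    qed (use Kp[of t] en[of t] in auto)
  qed
  define F1 where "F1 = (\<lambda>t. w t * cos (2 * phi t) - z t * sin (2 * phi t))"
  define F2 where "F2 = (\<lambda>t. w t * sin (2 * phi t) + z t * cos (2 * phi t))"
  have cD: "((\<lambda>t. cos (2 * phi t)) has_real_derivative - sin (2 * phi t) * (2 * om t)) (at t)" for t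
    by (rule DERIV_chain2[OF DERIV_cos DERIV_cmult[OF phiD]])
  have sD: "((\<lambda>t. sin (2 * phi t)) has_real_derivative cos (2 * phi t) * (2 * om t)) (at t)" for t
    by (rule DERIV_chain2[OF DERIV_sin DERIV_cmult[OF phiD]])
  have F1D: "(F1 has_real_derivative 0) (at t)" for t
    unfolding F1_def
    by (rule DERIV_cong[OF DERIV_diff[OF DERIV_mult[OF wD cD] DERIV_mult[OF zD sD]]]) (simp add: algebra_simps)
  have F2D: "(F2 has_real_derivative 0) (at t)" for t
    unfolding F2_def
    by (rule DERIV_cong[OF DERIV_add[OF DERIV_mult[OF wD sD] DERIV_mult[OF zD cD]]]) (simp add: algebra_simps)
  obtain t0 where t0: "\<forall>t. chi t0 \<le> chi t" "phi t0 = 0" using normal by blast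
  have p0: "pchi t0 = 0"
  proof -
    have "cosh (chi t0) ^ 2 * pchi t0 / (1 + \<rho> * sinh (chi t0) ^ 2) = 0"
      by (rule DERIV_local_min[OF chiD[of t0], of 1]) (use t0 in auto)
    then show ?thesis using Kp[of t0] by simp
  qed
  define w0 where "w0 = w t0"
  have z0: "z t0 = 0" unfolding z_def using p0 by simp
  have F1c: "F1 t = w0" for t
    using DERIV_isconst_all[of F1 t t0] F1D z0 t0(2) unfolding F1_def w0_def by simp
  have F2c: "F2 t = 0" for t
    using DERIV_isconst_all[of F2 t t0] F2D z0 t0(2) unfolding F2_def w0_def by simp
  have wt: "w t = w0 * cos (2 * phi t)" for t
  proof -
    have "F1 t * cos (2 * phi t) + F2 t * sin (2 * phi t) = w t * (cos (2 * phi t) * cos (2 * phi t) + sin (2 * phi t) * sin (2 * phi t))"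
      unfolding F1_def F2_def by algebra
    also have "\<dots> = w t" by (simp only: sin_cos_squared_add3 mult_1_right)
    finally show ?thesis using F1c F2c by simp
  qed
  have s0pos: "sinh (chi t0) > 0" using pos[of t0] by simp
  have en0: "L ^ 2 * cosh (chi t0) ^ 2 / sinh (chi t0) ^ 2 + \<xi> * sinh (chi t0) ^ 2
      = 2 * E * (1 + \<rho> * sinh (chi t0) ^ 2)" using en[of t0] p0 by simp
  have w0sq: "w0 ^ 2 = A ^ 2 + L ^ 2 * \<sigma>"
    unfolding w0_def w_def A_def \<sigma>_def
    by (rule alg3[OF s0pos _ en0]) (simp add: cosh_square_eq)
  have xipos: "\<xi> > 0" using xi rho0 by (smt (verit) mult_nonneg_nonneg zero_le_power2)
  have Epos: "E > 0"
  proof -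
    have "L ^ 2 * cosh (chi t0) ^ 2 / sinh (chi t0) ^ 2 > 0" using L s0pos by simp
    moreover have "\<xi> * sinh (chi t0) ^ 2 > 0" using xipos s0pos by simp
    ultimately have "2 * E * (1 + \<rho> * sinh (chi t0) ^ 2) > 0" using en0 by linarith
    then show ?thesis using Kp[of t0] by (simp add: zero_less_mult_iff)
  qed
  have Apos: "A > 0" unfolding A_def using Epos by (simp add: add_pos_nonneg)
  have sig: "\<sigma> < 0"
  proof -
    have "2 * \<rho> * E < \<xi>" using E(2) rho0 by (simp add: field_simps)
    then show ?thesis unfolding \<sigma>_def using Epos by (simp add: algebra_simps)
  qed
  have rad: "1 + L ^ 2 * \<sigma> / (E + L ^ 2 / 2) ^ 2 = (w0 / A) ^ 2"
    using w0sq Apos unfolding A_def[symmetric] by (simp add: field_simps power_divide)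
  have w0nn: "w0 \<ge> 0"
  proof (rule ccontr)
    assume neg: "\<not> w0 \<ge> 0"
    have le: "w t \<le> w0" for t
    proof -
      have st: "sinh (chi t0) \<le> sinh (chi t)" using t0(1) by simp
      have "1 / sinh (chi t) ^ 2 \<le> 1 / sinh (chi t0) ^ 2"
        using st s0pos by (intro divide_left_mono power_mono) (auto simp: zero_less_mult_iff)
      then show ?thesis unfolding w0_def w_def using coth_sq[OF pos[of t]] coth_sq[OF pos[of t0]] L
        by (simp add: mult_left_mono)
    qed
    have s0: "sin (2 * phi t) = 0" for t
    proof -
      have "w0 * cos (2 * phi t) \<le> w0 * 1" using le[of t] wt[of t] by simp
      then have "cos (2 * phi t) \<ge> 1" using neg mult_le_cancel_left_neg[of w0 "cos (2 * phi t)" 1] by simp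
      then have "cos (2 * phi t) = 1" using cos_le_one[of "2 * phi t"] by linarith
      then show ?thesis using sin_cos_squared_add[of "2 * phi t"] by simp
    qed
    have "((\<lambda>t. sin (2 * phi t)) has_real_derivative 0) (at t0)"
      using s0 by simp
    from DERIV_unique[OF sD[of t0] this] have "om t0 = 0" using t0(2) by simp
    moreover have "om t0 > 0" unfolding om_def using L s0pos Kp[of t0] by simp
    ultimately show False by simp
  qed
  have e_eq: "e = w0 / A"
    unfolding e_def rad using w0nn Apos by simp
  show ?thesis
  proof (intro conjI allI)
    fix t
    have "L ^ 2 / tanh (chi t) ^ 2 = w t + A" unfolding w_def by (simp add: tanh_def power_divide)
    also have "\<dots> = A * (1 + e * cos (2 * phi t))" unfolding wt e_eq using Apos by (simp add: field_simps)
    finally show "L ^ 2 / tanh (chi t) ^ 2 = (E + L ^ 2 / 2) * (1 + e * cos (2 * phi t))" unfolding A_def .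
  next
    show "0 \<le> 1 + L ^ 2 * \<sigma> / (E + L ^ 2 / 2) ^ 2" unfolding rad by simp
  next
    have "L ^ 2 * \<sigma> / (E + L ^ 2 / 2) ^ 2 < 0" using sig L Apos unfolding A_def
      by (simp add: divide_neg_pos mult_pos_neg)
    then have "1 + L ^ 2 * \<sigma> / (E + L ^ 2 / 2) ^ 2 < 1" by simp
    then show "e < 1" unfolding e_def by simp
  qed
qed
end
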